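(* Let $n\ge 1$ and let $G\le \mathrm{GL}_n(\mathbb C)$ be a finite group. Then $G$ has an abelian normal subgroup $A$ such that $\lvert G/A\rvert\le 25^{n^2}-9^{n^2}$. *)

theory Defs
  imports "HOL-Analysis.Analysis" "HOL-Algebra.Coset"
begin

text \<open>The general linear group GL_n(C), with n = CARD('n), as a HOL-Algebra monoid record.\<close>
definition GL :: "(complex^'n^'n) monoid" where
  "GL = \<lparr>carrier = {M. invertible M}, mult = (\<lambda>A B. A ** B), one = mat 1\<rparr>"

end

theory Submission
  imports Defs "HOL-Analysis.Analysis"
begin


locale normlike =
  fixes f :: "'a::euclidean_space \<Rightarrow> real"
  assumes add: "\<And>x y. f (x + y) \<le> f x + f y"
    and scal: "\<And>r x. f (r *\<^sub>R x) = \<bar>r\<bar> * f x"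
    and pos: "\<And>x. f x = 0 \<Longrightarrow> x = 0"
begin

lemma f0: "f 0 = 0"
  using scal[of 0 0] by simp

lemma nonneg: "0 \<le> f x"
proof -
  have "f (x + (-1) *\<^sub>R x) \<le> f x + f ((-1) *\<^sub>R x)" by (rule add)
  then show ?thesis using scal[of "-1" x] f0 by simp
qed

lemma minus: "f (- x) = f x"
  using scal[of "-1" x] by simp

lemma commute_diff: "f (x - y) = f (y - x)"
  using minus[of "x - y"] by simp

lemma tri_diff: "f x \<le> f (x - y) + f y"
  using add[of "x - y" y] by simp

lemma sum_le: "finite A \<Longrightarrow> f (\<Sum>i\<in>A. g i) \<le> (\<Sum>i\<in>A. f (g i))"
proof (induction A rule: finite_induct)
  case empty then show ?case by (simp add: f0)
next
  case (insert a A)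
  then show ?case using add[of "g a" "sum g A"] by simp
qed

lemma upper: "\<exists>C>0. \<forall>x. f x \<le> C * norm x"
proof -
  define C where "C = (\<Sum>b\<in>Basis. f b) + 1"
  have "0 \<le> (\<Sum>b\<in>Basis. f b)" by (rule sum_nonneg) (rule nonneg)
  then have C0: "C > 0" unfolding C_def by simp
  have "f x \<le> C * norm x" for x
  proof -
    have "f x = f (\<Sum>b\<in>Basis. (x \<bullet> b) *\<^sub>R b)" by (simp add: euclidean_representation)
    also have "\<dots> \<le> (\<Sum>b\<in>Basis. f ((x \<bullet> b) *\<^sub>R b))" by (rule sum_le) simp
    also have "\<dots> = (\<Sum>b\<in>Basis. \<bar>x \<bullet> b\<bar> * f b)" by (simp add: scal)
    also have "\<dots> \<le> (\<Sum>b\<in>Basis. norm x * f b)"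
      by (intro sum_mono mult_right_mono Basis_le_norm nonneg)
    also have "\<dots> = norm x * (\<Sum>b\<in>Basis. f b)" by (simp add: sum_distrib_left)
    also have "\<dots> \<le> C * norm x" unfolding C_def by (simp add: algebra_simps)
    finally show ?thesis .
  qed
  with C0 show ?thesis by blast
qed

lemma cont: "continuous_on UNIV f"
proof -
  obtain C where C: "C > 0" "\<And>x. f x \<le> C * norm x" using upper by blast
  have "C-lipschitz_on UNIV f"
  proof (rule lipschitz_onI)
    fix x y :: 'a
    have "f x \<le> f (x - y) + f y" "f y \<le> f (y - x) + f x" by (rule tri_diff)+
    moreover have "f (x - y) \<le> C * dist x y" "f (y - x) \<le> C * dist x y"
      using C(2)[of "x - y"] C(2)[of "y - x"] by (simp_all add: dist_norm norm_minus_commute)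
    ultimately show "dist (f x) (f y) \<le> C * dist x y" by (simp add: dist_real_def abs_le_iff)
  qed (use C in simp)
  then show ?thesis by (rule lipschitz_on_continuous_on)
qed

lemma lower: "\<exists>c>0. \<forall>x. c * norm x \<le> f x"
proof -
  obtain b :: 'a where b: "b \<in> Basis" using nonempty_Basis by blast
  have ne: "sphere (0::'a) 1 \<noteq> {}" using b by (auto simp: sphere_def intro!: exI[of _ b])
  obtain x0 where x0: "x0 \<in> sphere 0 1" "\<And>y. y \<in> sphere 0 1 \<Longrightarrow> f x0 \<le> f y"
    using continuous_attains_inf[OF compact_sphere ne continuous_on_subset[OF cont]] by blast
  have "x0 \<noteq> 0" using x0(1) by auto
  then have m: "f x0 > 0" using nonneg[of x0] pos[of x0] by fastforce
  have "f x0 * norm x \<le> f x" for x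
  proof (cases "x = 0")
    case True then show ?thesis by (simp add: f0)
  next
    case False
    then have "(1 / norm x) *\<^sub>R x \<in> sphere 0 1" by simp
    then have "f x0 \<le> f ((1 / norm x) *\<^sub>R x)" by (rule x0(2))
    also have "\<dots> = f x / norm x" by (simp add: scal)
    finally show ?thesis using False by (simp add: field_simps)
  qed
  with m show ?thesis by blast
qed

definition B :: "real \<Rightarrow> 'a set" where "B r = {x. f x < r}"

lemma B_lmeasurable: "B r \<in> lmeasurable"
proof -
  obtain c where c: "c > 0" "\<And>x. c * norm x \<le> f x" using lower by blast
  have "open (B r)" unfolding B_def by (rule open_Collect_less[OF cont continuous_on_const])
  moreover have "B r \<subseteq> cball 0 (r / c)"
  proof
    fix x assume "x \<in> B r"
    then have "c * norm x < r" using c(2)[of x] by (simp add: B_def)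
    then show "x \<in> cball 0 (r / c)" using c(1) by (simp add: field_simps)
  qed
  then have "bounded (B r)" using bounded_cball bounded_subset by blast
  ultimately show ?thesis by (intro lmeasurable_open)
qed

lemma B_scale: assumes "r > 0" shows "B r = (\<lambda>x. r *\<^sub>R x + 0) ` B 1"
proof
  show "B r \<subseteq> (\<lambda>x. r *\<^sub>R x + 0) ` B 1"
  proof
    fix x assume x: "x \<in> B r"
    have "f ((1/r) *\<^sub>R x) = f x / r" using assms by (simp add: scal)
    also have "\<dots> < 1" using x assms by (simp add: B_def)
    finally have "(1/r) *\<^sub>R x \<in> B 1" by (simp add: B_def)
    moreover have "x = r *\<^sub>R ((1/r) *\<^sub>R x) + 0" using assms by simp
    ultimately show "x \<in> (\<lambda>x. r *\<^sub>R x + 0) ` B 1" by blast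
  qed
  show "(\<lambda>x. r *\<^sub>R x + 0) ` B 1 \<subseteq> B r"
    using assms by (auto simp: B_def scal)
qed

lemma measure_B: assumes "r > 0" shows "measure lebesgue (B r) = r ^ DIM('a) * measure lebesgue (B 1)"
  using measure_lebesgue_affine[of r 0 "B 1"] assms B_scale[OF assms] by simp

lemma measure_B1_pos: "measure lebesgue (B 1) > 0"
proof -
  obtain C where C: "C > 0" "\<And>x. f x \<le> C * norm x" using upper by blast
  have sub: "ball 0 (1/C) \<subseteq> B 1"
  proof
    fix x assume "x \<in> ball (0::'a) (1/C)"
    then have "C * norm x < 1" using C(1) by (simp add: field_simps)
    then show "x \<in> B 1" using C(2)[of x] by (simp add: B_def)
  qed
  have "0 < measure lborel (ball (0::'a) (1/C))" using C(1) by (intro content_ball_pos) simp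
  also have "measure lborel (ball (0::'a) (1/C)) = measure lebesgue (ball (0::'a) (1/C))"
    by simp
  also have "\<dots> \<le> measure lebesgue (B 1)"
    using sub B_lmeasurable by (intro measure_mono_fmeasurable) auto
  finally show ?thesis .
qed

lemma packing:
  fixes R :: "'a set"
  assumes "finite R" and R1: "\<And>x. x \<in> R \<Longrightarrow> f x = 1"
    and Rsep: "\<And>x y. x \<in> R \<Longrightarrow> y \<in> R \<Longrightarrow> x \<noteq> y \<Longrightarrow> 1/2 \<le> f (x - y)"
  shows "real (card R) \<le> 5 ^ DIM('a) - 3 ^ DIM('a)"
proof -
  define V where "V = measure lebesgue (B 1)"
  define d where "d = DIM('a)"
  have V: "V > 0" unfolding V_def by (rule measure_B1_pos)
  define T where "T x = (+) x ` B (1/4)" for x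
  have memT: "y \<in> T x \<longleftrightarrow> f (y - x) < 1/4" for x y
  proof
    assume "y \<in> T x" then show "f (y - x) < 1/4" by (auto simp: T_def B_def)
  next
    assume "f (y - x) < 1/4"
    then have "y - x \<in> B (1/4)" by (simp add: B_def)
    then show "y \<in> T x" unfolding T_def by (rule rev_image_eqI) simp
  qed
  have Tm: "T x \<in> lmeasurable" for x unfolding T_def by (rule measurable_translation[OF B_lmeasurable])
  have Tmeas: "measure lebesgue (T x) = (1/4) ^ d * V" for x
    unfolding T_def measure_translation V_def d_def by (rule measure_B) simp
  have disj: "pairwise (\<lambda>x y. disjnt (T x) (T y)) R"
  proof (rule pairwiseI)
    fix x y assume xy: "x \<in> R" "y \<in> R" "x \<noteq> y"
    have "\<not> (z \<in> T x \<and> z \<in> T y)" for z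
    proof
      assume "z \<in> T x \<and> z \<in> T y"
      then have "f (z - x) < 1/4" "f (z - y) < 1/4" by (simp_all add: memT)
      moreover have "f (x - y) \<le> f (x - z) + f (z - y)" using add[of "x - z" "z - y"] by simp
      moreover have "f (x - z) = f (z - x)" by (rule commute_diff)
      ultimately have "f (x - y) < 1/2" by linarith
      with Rsep[OF xy] show False by linarith
    qed
    then show "disjnt (T x) (T y)" unfolding disjnt_iff by blast
  qed
  have sub: "(\<Union>x\<in>R. T x) \<subseteq> B (5/4) - B (3/4)"
  proof
    fix z assume "z \<in> (\<Union>x\<in>R. T x)"
    then obtain x where x: "x \<in> R" "f (z - x) < 1/4" by (auto simp: memT)
    have "f z \<le> f (z - x) + f x" by (rule tri_diff)
    moreover have "f x \<le> f (x - z) + f z" by (rule tri_diff)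
    moreover have "f (x - z) = f (z - x)" by (rule commute_diff)
    ultimately show "z \<in> B (5/4) - B (3/4)" using x R1[OF x(1)] by (simp add: B_def)
  qed
  have "real (card R) * ((1/4) ^ d * V) = (\<Sum>x\<in>R. measure lebesgue (T x))"
    by (simp add: Tmeas)
  also have "\<dots> = measure lebesgue (\<Union>x\<in>R. T x)"
    using assms(1) Tm disj by (intro measure_UNION'[symmetric]) auto
  also have "\<dots> \<le> measure lebesgue (B (5/4) - B (3/4))"
  proof (rule measure_mono_fmeasurable[OF sub])
    show "(\<Union>x\<in>R. T x) \<in> sets lebesgue"
      using assms(1) Tm by (intro sets.finite_UN) (auto simp: fmeasurable_def)
    show "B (5/4) - B (3/4) \<in> lmeasurable"
      using B_lmeasurable by (auto intro: fmeasurable_Diff)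
  qed
  also have "\<dots> = measure lebesgue (B (5/4)) - measure lebesgue (B (3/4))"
  proof (rule measure_Diff)
    show "emeasure lebesgue (B (5/4)) \<noteq> \<infinity>" using fmeasurableD2[OF B_lmeasurable, of "5/4"] by simp
    show "B (3/4) \<subseteq> B (5/4)" by (auto simp: B_def)
    show "B (5/4) \<in> sets lebesgue" by (rule fmeasurableD[OF B_lmeasurable])
    show "B (3/4) \<in> sets lebesgue" by (rule fmeasurableD[OF B_lmeasurable])
  qed
  also have "\<dots> = (5/4) ^ d * V - (3/4) ^ d * V"
    unfolding V_def d_def using measure_B[of "5/4"] measure_B[of "3/4"] by simp
  also have "\<dots> = ((5/4) ^ d - (3/4) ^ d) * V"
    by (rule left_diff_distrib[symmetric])
  finally have le: "real (card R) * ((1/4) ^ d * V) \<le> ((5/4) ^ d - (3/4) ^ d) * V" .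
  have "(real (card R) * (1/4) ^ d) * V \<le> ((5/4) ^ d - (3/4) ^ d) * V"
    using le by (simp only: mult.assoc)
  then have le2: "real (card R) * (1/4) ^ d \<le> (5/4) ^ d - (3/4) ^ d"
    using V by (rule mult_right_le_imp_le)
  have e1: "(1/4::real) ^ d * 4 ^ d = 1" by (simp flip: power_mult_distrib)
  have e2: "((5/4::real) ^ d - (3/4) ^ d) * 4 ^ d = 5 ^ d - 3 ^ d"
    by (simp add: left_diff_distrib flip: power_mult_distrib)
  have "real (card R) = real (card R) * (1/4) ^ d * 4 ^ d" using e1 by (simp only: mult.assoc)
  also have "\<dots> \<le> ((5/4) ^ d - (3/4) ^ d) * 4 ^ d"
    using le2 by (rule mult_right_mono) simp
  also have "\<dots> = 5 ^ d - 3 ^ d" by (rule e2)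
  finally have "real (card R) \<le> 5 ^ d - 3 ^ d" .
  then show ?thesis by (simp add: d_def)
qed

end



lemma matrix_inv_props:
  fixes A :: "complex^'n^'n"
  assumes "invertible A"
  shows "A ** matrix_inv A = mat 1" "matrix_inv A ** A = mat 1"
  using someI_ex[OF assms[unfolded invertible_def]] unfolding matrix_inv_def by auto

lemma mv_scaleR_mat: "(r *\<^sub>R X) *v x = r *\<^sub>R (X *v (x::complex^'n))" for X :: "complex^'n^'n"
  by (simp add: matrix_vector_mult_def vec_eq_iff scaleR_sum_right)

lemma mv_scaleR_vec: "X *v (r *\<^sub>R x) = r *\<^sub>R (X *v (x::complex^'n))" for X :: "complex^'n^'n"
  by (simp add: matrix_vector_mult_def vec_eq_iff scaleR_sum_right)

lemma mv_add_vec: "X *v (x + y) = X *v x + X *v (y::complex^'n)" for X :: "complex^'n^'n"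
  by (simp add: matrix_vector_right_distrib)

lemma mv_bound: "\<exists>K\<ge>0. \<forall>x. norm (X *v x) \<le> K * norm (x::complex^'n)" for X :: "complex^'n^'n"
proof -
  obtain K where "\<And>x. norm (X *v x) \<le> norm x * K"
    using bounded_linear.bounded[OF matrix_vector_mul_bounded_linear[of X]] by blast
  then have "\<forall>x. norm (X *v x) \<le> max K 0 * norm (x::complex^'n)"
    by (metis max.cobounded1 mult.commute mult_left_mono norm_ge_zero order_trans)
  then show ?thesis by (intro exI[of _ "max K 0"]) auto
qed


fun mpow :: "complex^'n^'n \<Rightarrow> nat \<Rightarrow> complex^'n^'n" where
  "mpow X 0 = mat 1" | "mpow X (Suc k) = X ** mpow X k"

lemma mm_add_r: "(A + B) ** C = A ** C + B ** (C::complex^'n^'n)" for A B :: "complex^'n^'n"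
  by (simp add: matrix_matrix_mult_def vec_eq_iff sum.distrib algebra_simps)
lemma mm_diff_r: "(A - B) ** C = A ** C - B ** (C::complex^'n^'n)" for A B :: "complex^'n^'n"
  by (simp add: matrix_matrix_mult_def vec_eq_iff sum_subtractf algebra_simps)
lemma mm_diff_l: "C ** (A - B) = C ** A - C ** (B::complex^'n^'n)" for A B :: "complex^'n^'n"
  by (simp add: matrix_matrix_mult_def vec_eq_iff sum_subtractf algebra_simps)
lemma mm_scale_l: "(r *\<^sub>R A) ** B = r *\<^sub>R (A ** (B::complex^'n^'n))" for A :: "complex^'n^'n"
  by (simp add: matrix_matrix_mult_def vec_eq_iff scaleR_sum_right)
lemma mm_scale_r: "A ** (r *\<^sub>R B) = r *\<^sub>R (A ** (B::complex^'n^'n))" for A :: "complex^'n^'n"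
  by (simp add: matrix_matrix_mult_def vec_eq_iff scaleR_sum_right)
lemma mm_sum_l: "(\<Sum>k\<in>K. A k) ** B = (\<Sum>k\<in>K. A k ** (B::complex^'n^'n))" for A :: "'i \<Rightarrow> complex^'n^'n"
  by (induction K rule: infinite_finite_induct) (simp_all add: mm_add_r)
lemma mm_sum_r: "B ** (\<Sum>k\<in>K. A k) = (\<Sum>k\<in>K. B ** (A k::complex^'n^'n))" for B :: "complex^'n^'n"
  by (induction K rule: infinite_finite_induct) (simp_all add: matrix_add_ldistrib)

lemma mpow_add: "mpow X (i + j) = mpow X i ** mpow X j"
  by (induction i) (simp_all add: matrix_mul_assoc)

lemma mpow_comm: "X ** Y = Y ** X \<Longrightarrow> Y ** mpow X k = mpow X k ** Y"
  by (induction k) (simp_all add: matrix_mul_assoc, metis matrix_mul_assoc)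

lemma mpow_mult_comm: assumes "X ** Y = Y ** X" shows "mpow (X ** Y) k = mpow X k ** mpow Y k"
proof (induction k)
  case 0 then show ?case by simp
next
  case (Suc k)
  have "mpow (X ** Y) (Suc k) = X ** (Y ** mpow X k) ** mpow Y k"
    using Suc by (simp add: matrix_mul_assoc)
  also have "\<dots> = X ** (mpow X k ** Y) ** mpow Y k" using mpow_comm[OF assms] by simp
  also have "\<dots> = mpow X (Suc k) ** mpow Y (Suc k)" by (simp add: matrix_mul_assoc)
  finally show ?case .
qed

lemma mpow_conj: assumes "B' ** B = mat 1" "B ** B' = mat 1"
  shows "mpow (B ** A ** B') k = B ** mpow A k ** B'"
proof (induction k)
  case 0 then show ?case using assms by simp
next
  case (Suc k)
  have "mpow (B ** A ** B') (Suc k) = B ** A ** (B' ** B) ** mpow A k ** B'"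
    using Suc by (simp add: matrix_mul_assoc)
  then show ?case using assms by (simp add: matrix_mul_assoc)
qed

lemma mpow_inv: assumes "A' ** A = mat 1" "A ** A' = mat 1"
  shows "mpow A' k ** mpow A k = mat 1"
proof (induction k)
  case 0 then show ?case by simp
next
  case (Suc k)
  have c: "mpow A' k ** A = A ** mpow A' k" using mpow_comm[of A' A k] assms by simp
  have "mpow A' (Suc k) ** mpow A (Suc k) = A' ** (mpow A' k ** A) ** mpow A k"
    by (simp add: matrix_mul_assoc)
  also have "\<dots> = (A' ** A) ** (mpow A' k ** mpow A k)" unfolding c by (simp add: matrix_mul_assoc)
  also have "\<dots> = mat 1" using Suc assms by simp
  finally show ?case .
qed


locale fg =
  fixes G :: "(complex^'n^'n) set"
  assumes fin: "finite G"
    and G_one: "mat 1 \<in> G"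
    and G_mul: "\<And>x y. x \<in> G \<Longrightarrow> y \<in> G \<Longrightarrow> x ** y \<in> G"
    and G_invertible: "\<And>x. x \<in> G \<Longrightarrow> invertible x"
    and G_inv: "\<And>x. x \<in> G \<Longrightarrow> matrix_inv x \<in> G"
begin

lemma G_inv_r: "x \<in> G \<Longrightarrow> x ** matrix_inv x = mat 1"
  using matrix_inv_props G_invertible by blast
lemma G_inv_l: "x \<in> G \<Longrightarrow> matrix_inv x ** x = mat 1"
  using matrix_inv_props G_invertible by blast

definition nv :: "complex^'n \<Rightarrow> real" where
  "nv x = (\<Sum>g\<in>G. norm (g *v x))"

lemma nv_G: assumes g: "g \<in> G" shows "nv (g *v x) = nv x"
proof -
  have inj: "inj_on (\<lambda>h. h ** g) G"
  proof (rule inj_onI)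
    fix h h' assume "h \<in> G" "h' \<in> G" "h ** g = h' ** g"
    then have "(h ** g) ** matrix_inv g = (h' ** g) ** matrix_inv g" by simp
    then show "h = h'" using G_inv_r[OF g] by (simp add: matrix_mul_assoc[symmetric])
  qed
  have img: "(\<lambda>h. h ** g) ` G = G"
  proof
    show "(\<lambda>h. h ** g) ` G \<subseteq> G" using G_mul g by blast
    show "G \<subseteq> (\<lambda>h. h ** g) ` G"
    proof
      fix k assume k: "k \<in> G"
      have "k = (k ** matrix_inv g) ** g" using G_inv_l[OF g] by (simp add: matrix_mul_assoc[symmetric])
      moreover have "k ** matrix_inv g \<in> G" using G_mul G_inv k g by blast
      ultimately show "k \<in> (\<lambda>h. h ** g) ` G" by blast
    qed
  qed
  have "nv (g *v x) = (\<Sum>h\<in>G. norm ((h ** g) *v x))"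
    unfolding nv_def by (simp add: matrix_vector_mul_assoc)
  also have "\<dots> = (\<Sum>k\<in>(\<lambda>h. h ** g) ` G. norm (k *v x))"
    using sum.reindex[OF inj, of "\<lambda>k. norm (k *v x)"] by simp
  also have "\<dots> = nv x" unfolding img nv_def ..
  finally show ?thesis .
qed

lemma nv_ge: "norm x \<le> nv x"
proof -
  have "norm (mat 1 *v x) \<le> nv x"
    unfolding nv_def by (rule member_le_sum[OF G_one]) (simp_all add: fin)
  then show ?thesis by simp
qed

lemma nv_nonneg: "0 \<le> nv x"
  using nv_ge[of x] norm_ge_zero[of x] by linarith

lemma nv_add: "nv (x + y) \<le> nv x + nv y"
  unfolding nv_def sum.distrib[symmetric]
  by (rule sum_mono) (simp add: mv_add_vec norm_triangle_ineq)

lemma nv_scale: "nv (r *\<^sub>R x) = \<bar>r\<bar> * nv x"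
  unfolding nv_def by (simp add: mv_scaleR_vec sum_distrib_left)

lemma nv_zero: "nv x = 0 \<Longrightarrow> x = 0"
  using nv_ge[of x] by simp

lemma nv_neg: "nv (- x) = nv x"
  using nv_scale[of "-1" x] by simp

lemma nv_0[simp]: "nv 0 = 0"
  unfolding nv_def by simp

lemma nv_upper: "\<exists>K\<ge>0. \<forall>x. nv x \<le> K * norm x"
proof -
  have "\<forall>g::complex^'n^'n. \<exists>K\<ge>0. \<forall>x::complex^'n. norm (g *v x) \<le> K * norm x" by (intro allI mv_bound)
  then have "\<exists>K. \<forall>g::complex^'n^'n. K g \<ge> 0 \<and> (\<forall>x::complex^'n. norm (g *v x) \<le> K g * norm x)"
    by (rule choice)
  then obtain K :: "complex^'n^'n \<Rightarrow> real" where K: "\<And>g. K g \<ge> 0" "\<And>g x. norm (g *v x) \<le> K g * norm x" by blast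
  have "nv x \<le> (\<Sum>g\<in>G. K g) * norm x" for x
    unfolding nv_def sum_distrib_right by (rule sum_mono) (rule K(2))
  moreover have "(\<Sum>g\<in>G. K g) \<ge> 0" using K(1) by (simp add: sum_nonneg)
  ultimately show ?thesis by blast
qed


definition dl :: "complex^'n^'n \<Rightarrow> real" where
  "dl X = Sup ((\<lambda>x. nv (X *v x)) ` {x. nv x \<le> 1})"

lemma dl_bdd: "bdd_above ((\<lambda>x. nv (X *v x)) ` {x. nv x \<le> 1})"
proof -
  obtain K where K: "K \<ge> 0" "\<And>x. nv x \<le> K * norm x" using nv_upper by blast
  obtain L where L: "L \<ge> 0" "\<And>x. norm (X *v x) \<le> L * norm x" using mv_bound by blast
  show ?thesis
  proof (rule bdd_aboveI)
    fix y assume "y \<in> (\<lambda>x. nv (X *v x)) ` {x. nv x \<le> 1}"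
    then obtain x where x: "nv x \<le> 1" "y = nv (X *v x)" by blast
    have "y \<le> K * norm (X *v x)" using K(2) x(2) by simp
    also have "\<dots> \<le> K * (L * norm x)" using K(1) L(2) by (simp add: mult_left_mono)
    also have "\<dots> \<le> K * (L * nv x)" using K(1) L(1) nv_ge by (simp add: mult_left_mono)
    also have "\<dots> \<le> K * (L * 1)" using K(1) L(1) x(1) by (intro mult_left_mono) auto
    finally show "y \<le> K * L" by simp
  qed
qed

lemma dl_nonneg: "0 \<le> dl X"
proof -
  have "nv (X *v 0) \<in> (\<lambda>x. nv (X *v x)) ` {x. nv x \<le> 1}" by (rule imageI) simp
  then have "nv (X *v 0) \<le> dl X" unfolding dl_def
    by (rule cSup_upper[OF _ dl_bdd])
  then show ?thesis by simp
qed

lemma dl_le: "nv (X *v x) \<le> dl X * nv x"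
proof (cases "nv x = 0")
  case True
  then have "x = 0" by (rule nv_zero)
  then show ?thesis by simp
next
  case False
  then have pos: "nv x > 0" using nv_nonneg[of x] by linarith
  define y where "y = (1 / nv x) *\<^sub>R x"
  have ny: "nv y = 1" unfolding y_def nv_scale using pos by simp
  have "nv (X *v y) \<le> dl X" unfolding dl_def
    by (rule cSup_upper[OF _ dl_bdd]) (use ny in simp)
  moreover have "nv (X *v y) = nv (X *v x) / nv x"
    unfolding y_def mv_scaleR_vec nv_scale using pos by simp
  ultimately show ?thesis using pos by (simp add: field_simps)
qed

lemma dl_least: assumes "0 \<le> c" "\<And>x. nv (X *v x) \<le> c * nv x" shows "dl X \<le> c"
  unfolding dl_def
proof (rule cSup_least)
  show "(\<lambda>x. nv (X *v x)) ` {x. nv x \<le> 1} \<noteq> {}" by (auto intro!: exI[of _ 0])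
  fix y assume "y \<in> (\<lambda>x. nv (X *v x)) ` {x. nv x \<le> 1}"
  then obtain x where x: "nv x \<le> 1" "y = nv (X *v x)" by blast
  have "y \<le> c * nv x" using assms(2) x(2) by simp
  also have "\<dots> \<le> c * 1" using x(1) assms(1) by (rule mult_left_mono)
  finally show "y \<le> c" by simp
qed

lemma dl_add: "dl (X + Y) \<le> dl X + dl Y"
proof (rule dl_least)
  show "0 \<le> dl X + dl Y" using dl_nonneg by (simp add: add_nonneg_nonneg)
  fix x
  have "nv ((X + Y) *v x) \<le> nv (X *v x) + nv (Y *v x)"
    by (simp add: matrix_vector_mult_add_rdistrib nv_add)
  also have "\<dots> \<le> dl X * nv x + dl Y * nv x" using dl_le by (intro add_mono)
  finally show "nv ((X + Y) *v x) \<le> (dl X + dl Y) * nv x" by (simp add: algebra_simps)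
qed

lemma dl_scale_le: "dl (r *\<^sub>R X) \<le> \<bar>r\<bar> * dl X"
proof (rule dl_least)
  show "0 \<le> \<bar>r\<bar> * dl X" using dl_nonneg by simp
  fix x
  have "nv ((r *\<^sub>R X) *v x) = \<bar>r\<bar> * nv (X *v x)" by (simp add: mv_scaleR_mat nv_scale)
  also have "\<dots> \<le> \<bar>r\<bar> * (dl X * nv x)" using dl_le by (intro mult_left_mono) auto
  finally show "nv ((r *\<^sub>R X) *v x) \<le> \<bar>r\<bar> * dl X * nv x" by (simp add: algebra_simps)
qed

lemma dl_scale: "dl (r *\<^sub>R X) = \<bar>r\<bar> * dl X"
proof (cases "r = 0")
  case True
  have "dl (r *\<^sub>R X) \<le> 0" using dl_scale_le[of r X] True by simp
  then show ?thesis using True dl_nonneg[of "r *\<^sub>R X"] by simp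
next
  case False
  have "dl X = dl ((1/r) *\<^sub>R (r *\<^sub>R X))" using False by simp
  also have "\<dots> \<le> \<bar>1/r\<bar> * dl (r *\<^sub>R X)" by (rule dl_scale_le)
  finally have "\<bar>r\<bar> * dl X \<le> dl (r *\<^sub>R X)" using False by (simp add: field_simps)
  then show ?thesis using dl_scale_le[of r X] by linarith
qed

lemma dl_zero: assumes "dl X = 0" shows "X = 0"
proof -
  have "X *v x = 0 *v x" for x
  proof -
    have "nv (X *v x) \<le> 0" using dl_le[of X x] assms by simp
    then have "nv (X *v x) = 0" using nv_nonneg[of "X *v x"] by linarith
    then show ?thesis using nv_zero by simp
  qed
  then show ?thesis by (simp add: matrix_eq)
qed

lemma dl_mult: "dl (X ** Y) \<le> dl X * dl Y"
proof (rule dl_least)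
  show "0 \<le> dl X * dl Y" using dl_nonneg by simp
  fix x
  have "nv ((X ** Y) *v x) = nv (X *v (Y *v x))" by (simp add: matrix_vector_mul_assoc)
  also have "\<dots> \<le> dl X * nv (Y *v x)" by (rule dl_le)
  also have "\<dots> \<le> dl X * (dl Y * nv x)" using dl_le dl_nonneg by (intro mult_left_mono)
  finally show "nv ((X ** Y) *v x) \<le> dl X * dl Y * nv x" by (simp add: algebra_simps)
qed

lemma dl_Gl: assumes "g \<in> G" shows "dl (g ** X) = dl X"
  unfolding dl_def using nv_G[OF assms] by (simp add: matrix_vector_mul_assoc[symmetric])

lemma dl_Gr_le: assumes "g \<in> G" shows "dl (X ** g) \<le> dl X"
proof (rule dl_least)
  show "0 \<le> dl X" by (rule dl_nonneg)
  fix x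
  have "nv ((X ** g) *v x) = nv (X *v (g *v x))" by (simp add: matrix_vector_mul_assoc)
  also have "\<dots> \<le> dl X * nv (g *v x)" by (rule dl_le)
  finally show "nv ((X ** g) *v x) \<le> dl X * nv x" using nv_G[OF assms] by simp
qed

lemma dl_Gr: assumes "g \<in> G" shows "dl (X ** g) = dl X"
proof -
  have "dl X = dl ((X ** g) ** matrix_inv g)"
    using G_inv_r[OF assms] by (simp add: matrix_mul_assoc[symmetric])
  also have "\<dots> \<le> dl (X ** g)" using G_inv[OF assms] by (rule dl_Gr_le)
  finally show ?thesis using dl_Gr_le[OF assms, of X] by linarith
qed

lemma dl_one: "dl (mat 1) = 1"
proof -
  have le: "dl (mat 1) \<le> 1" by (rule dl_least) simp_all
  obtain i :: 'n where True by simp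
  define x :: "complex^'n" where "x = axis i 1"
  have "x \<noteq> 0" unfolding x_def by (simp add: axis_eq_0_iff)
  then have pos: "nv x > 0" using nv_zero nv_nonneg[of x] by force
  have "nv x \<le> dl (mat 1) * nv x" using dl_le[of "mat 1" x] by simp
  then have "1 \<le> dl (mat 1)" using pos by simp
  with le show ?thesis by simp
qed

lemma dl_G: "g \<in> G \<Longrightarrow> dl g = 1"
  using dl_Gr[of g "mat 1"] dl_one by simp

lemma dl_minus: "dl (- X) = dl X"
  using dl_scale[of "-1" X] by simp

lemma dl_normlike: "normlike dl"
proof
  show "dl (x + y) \<le> dl x + dl y" for x y by (rule dl_add)
  show "dl (r *\<^sub>R x) = \<bar>r\<bar> * dl x" for r x by (rule dl_scale)
  show "dl x = 0 \<Longrightarrow> x = 0" for x by (rule dl_zero)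
qed


lemma Gl_cancel[simp]: "x \<in> G \<Longrightarrow> P ** x ** matrix_inv x = P"
  using G_inv_r by (simp add: matrix_mul_assoc[symmetric])
lemma Gl_cancel2[simp]: "x \<in> G \<Longrightarrow> P ** matrix_inv x ** x = P"
  using G_inv_l by (simp add: matrix_mul_assoc[symmetric])

lemma mpow_G: "u \<in> G \<Longrightarrow> mpow u k \<in> G"
  by (induction k) (auto intro: G_one G_mul)

lemma finite_order: assumes u: "u \<in> G" shows "\<exists>m>0. mpow u m = mat 1"
proof -
  have "range (mpow u) \<subseteq> G" using mpow_G[OF u] by blast
  then have "finite (range (mpow u))" using fin finite_subset by blast
  then have "\<not> inj (mpow u)" using finite_imageD infinite_UNIV_nat by blast
  then obtain i j where ij: "i \<noteq> j" "mpow u i = mpow u j" unfolding inj_on_def by blast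
  then obtain i j where ij: "i < j" "mpow u i = mpow u j"
    by (metis linorder_neq_iff)
  define m where "m = j - i"
  have "mpow u j = mpow u i ** mpow u m" using ij(1) mpow_add[of u i m] by (simp add: m_def)
  then have "mpow u i = mpow u i ** mpow u m" using ij(2) by simp
  then have "mpow (matrix_inv u) i ** mpow u i = mpow (matrix_inv u) i ** (mpow u i ** mpow u m)"
    by simp
  then have "mpow (matrix_inv u) i ** mpow u i = mpow (matrix_inv u) i ** mpow u i ** mpow u m"
    by (simp add: matrix_mul_assoc)
  moreover have "mpow (matrix_inv u) i ** mpow u i = mat 1"
    using mpow_inv[OF G_inv_l[OF u] G_inv_r[OF u]] by blast
  ultimately have "mpow u m = mat 1" by simp
  moreover have "m > 0" using ij(1) by (simp add: m_def)
  ultimately show ?thesis by blast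
qed

lemma dl_sum: "finite K \<Longrightarrow> dl (\<Sum>k\<in>K. A k) \<le> (\<Sum>k\<in>K. dl (A k))"
  using normlike.sum_le[OF dl_normlike] by blast

lemma lemma_U:
  assumes u: "u \<in> G" and c: "c < 1" and bound: "\<And>k. dl (mpow u k - mat 1) \<le> c"
  shows "u = mat 1"
proof -
  obtain m where m: "m > 0" "mpow u m = mat 1" using finite_order[OF u] by blast
  define S where "S = (\<Sum>k<m. mpow u k)"
  define Q where "Q = (1 / real m) *\<^sub>R S"
  have uS: "u ** S = S"
  proof -
    obtain n where n: "m = Suc n" using m(1) gr0_implies_Suc by blast
    have "u ** S = (\<Sum>k<m. mpow u (Suc k))" unfolding S_def by (simp add: mm_sum_r)
    moreover have A1: "(\<Sum>k<Suc m. mpow u k) = mpow u 0 + (\<Sum>k<m. mpow u (Suc k))"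
      by (rule sum.lessThan_Suc_shift)
    moreover have A2: "(\<Sum>k<Suc m. mpow u k) = S + mpow u m"
      unfolding S_def by (rule sum.lessThan_Suc)
    ultimately show ?thesis using m(2) by (metis add.commute add_left_cancel mpow.simps(1))
  qed
  have pS: "mpow u k ** S = S" for k
    by (induction k) (simp_all add: matrix_mul_assoc[symmetric] uS)
  have SS: "S ** S = real m *\<^sub>R S"
    unfolding S_def[of] by (simp add: mm_sum_l pS[unfolded S_def] scaleR_conv_of_real)
  have QQ: "Q ** Q = Q"
    unfolding Q_def using m(1) by (simp add: mm_scale_l mm_scale_r SS)
  have sd: "(\<Sum>k<m. mpow u k - mat 1) = S - real m *\<^sub>R mat 1"
    unfolding S_def sum_subtractf sum_constant_scaleR by simp
  have "Q - mat 1 = (1 / real m) *\<^sub>R (\<Sum>k<m. mpow u k - mat 1)"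
    unfolding sd Q_def using m(1) by (simp add: scaleR_diff_right)
  then have "dl (Q - mat 1) \<le> (1 / real m) * (\<Sum>k<m. dl (mpow u k - mat 1))"
    using dl_sum[of "{..<m}"] by (simp add: dl_scale divide_right_mono)
  also have "\<dots> \<le> (1 / real m) * (\<Sum>k<m. c)"
    by (intro mult_left_mono sum_mono bound) simp
  also have "\<dots> = c" using m(1) by simp
  finally have dQ: "dl (Q - mat 1) \<le> c" .
  have Qx: "Q *v x = x" for x
  proof -
    define y where "y = x - Q *v x"
    have "Q *v y = 0" unfolding y_def
      by (simp add: matrix_vector_mult_diff_distrib matrix_vector_mul_assoc QQ)
    then have "(Q - mat 1) *v y = - y" by (simp add: matrix_vector_mult_diff_rdistrib)
    then have "nv y \<le> dl (Q - mat 1) * nv y" using dl_le[of "Q - mat 1" y] by (simp add: nv_neg)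
    also have "\<dots> \<le> c * nv y" using dQ nv_nonneg by (rule mult_right_mono)
    finally have "nv y = 0" using c nv_nonneg[of y] by (smt (verit) mult_le_cancel_right1)
    then have "y = 0" by (rule nv_zero)
    then show ?thesis unfolding y_def by simp
  qed
  then have Q1: "Q = mat 1" by (simp add: matrix_eq)
  have uQ: "u ** Q = Q" unfolding Q_def by (simp add: mm_scale_r uS)
  have "u = u ** Q" using Q1 by simp
  also have "\<dots> = Q" by (rule uQ)
  finally show ?thesis using Q1 by simp
qed


lemma dl_diff: "dl (X - Y) \<le> dl X + dl Y"
  using dl_add[of X "- Y"] dl_minus[of Y] by simp

lemma G_inv_l'[simp]: "x \<in> G \<Longrightarrow> matrix_inv x ** x = mat 1" by (rule G_inv_l)
lemma G_inv_r'[simp]: "x \<in> G \<Longrightarrow> x ** matrix_inv x = mat 1" by (rule G_inv_r)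

lemma lemma_K:
  assumes a: "a \<in> G" and b: "b \<in> G" and db: "dl (b - mat 1) < 1/2"
    and comm: "a ** (b ** a ** matrix_inv b) = (b ** a ** matrix_inv b) ** a"
  shows "a ** b = b ** a"
proof -
  define ai where "ai = matrix_inv a"
  define bi where "bi = matrix_inv b"
  define a' where "a' = b ** a ** bi"
  have ai: "ai \<in> G" "ai ** a = mat 1" "a ** ai = mat 1" using a by (simp_all add: ai_def G_inv)
  have bi: "bi \<in> G" "bi ** b = mat 1" "b ** bi = mat 1" using b by (simp_all add: bi_def G_inv)
  have a'G: "a' \<in> G" unfolding a'_def using a b bi by (intro G_mul) auto
  have comm': "a ** a' = a' ** a" using comm unfolding a'_def bi_def .
  have "ai ** (a ** a') ** ai = ai ** (a' ** a) ** ai" using comm' by simp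
  then have comm2: "ai ** a' = a' ** ai"
    by (simp add: matrix_mul_assoc ai(2)) (metis ai(3) matrix_mul_assoc matrix_mul_rid)
  define u where "u = ai ** a'"
  have uG: "u \<in> G" unfolding u_def using ai a'G by (intro G_mul) auto
  have bound: "dl (mpow u k - mat 1) \<le> 2 * dl (b - mat 1)" for k
  proof -
    define P where "P = mpow a k"
    define Pi where "Pi = mpow ai k"
    have PG: "P \<in> G" "Pi \<in> G" unfolding P_def Pi_def using a ai by (simp_all add: mpow_G)
    have PiP: "Pi ** P = mat 1" unfolding P_def Pi_def by (rule mpow_inv[OF ai(2) ai(3)])
    have "mpow u k = Pi ** (b ** P ** bi)"
      unfolding u_def Pi_def P_def a'_def
      using mpow_mult_comm[OF comm2, of k] mpow_conj[OF bi(2) bi(3), of a k]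
      by (simp add: a'_def)
    then have e: "mpow u k - mat 1 = Pi ** ((b ** P - P ** b) ** bi)"
      by (simp add: mm_diff_l mm_diff_r matrix_mul_assoc PiP bi)
    have e2: "b ** P - P ** b = (b - mat 1) ** P - P ** (b - mat 1)"
      by (simp add: mm_diff_l mm_diff_r)
    have "dl (mpow u k - mat 1) = dl (b ** P - P ** b)"
      unfolding e dl_Gl[OF PG(2)] dl_Gr[OF bi(1)] ..
    also have "\<dots> \<le> dl ((b - mat 1) ** P) + dl (P ** (b - mat 1))" unfolding e2 by (rule dl_diff)
    also have "\<dots> = 2 * dl (b - mat 1)" using dl_Gl[OF PG(1)] dl_Gr[OF PG(1)] by simp
    finally show ?thesis .
  qed
  have "u = mat 1" by (rule lemma_U[OF uG _ bound]) (use db in simp)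
  then have "a ** u = a" by simp
  then have "a' = a" unfolding u_def by (simp add: matrix_mul_assoc ai(3))
  then have "b ** a ** bi ** b = a ** b" unfolding a'_def by simp
  then show ?thesis by (simp add: matrix_mul_assoc[symmetric] bi(2))
qed

definition Ssm :: "(complex^'n^'n) set" where
  "Ssm = {g \<in> G. dl (g - mat 1) < 1/2}"

lemma Ssm_comm:
  assumes aS: "a \<in> Ssm" and bS: "b \<in> Ssm"
  shows "a ** b = b ** a"
  using bS
proof (induction b rule: measure_induct_rule[where f="\<lambda>b. card {x\<in>G. dl (x - mat 1) < dl (b - mat 1)}"])
  case (less b)
  have a: "a \<in> G" "dl (a - mat 1) < 1/2" using aS by (auto simp: Ssm_def)
  have b: "b \<in> G" "dl (b - mat 1) < 1/2" using less.prems by (auto simp: Ssm_def)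
  show ?case
  proof (rule ccontr)
    assume nc: "a ** b \<noteq> b ** a"
    then have "b \<noteq> mat 1" by auto
    then have "b - mat 1 \<noteq> 0" by simp
    then have "dl (b - mat 1) \<noteq> 0" using dl_zero by blast
    then have dbpos: "dl (b - mat 1) > 0" using dl_nonneg[of "b - mat 1"] by linarith
    define ai where "ai = matrix_inv a"
    define bi where "bi = matrix_inv b"
    have ai: "ai \<in> G" "ai ** a = mat 1" "a ** ai = mat 1" using a by (simp_all add: ai_def G_inv)
    have bi: "bi \<in> G" "bi ** b = mat 1" "b ** bi = mat 1" using b by (simp_all add: bi_def G_inv)
    define c where "c = a ** b ** ai ** bi"
    have cG: "c \<in> G" unfolding c_def using a b ai bi by (intro G_mul) auto
    have aibi: "ai ** bi \<in> G" using ai bi G_mul by blast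
    have canc: "\<And>P. P ** bi ** b = P" "\<And>P. P ** b ** bi = P" "\<And>P. P ** a ** ai = P" "\<And>P. P ** ai ** a = P"
      by (metis matrix_mul_assoc matrix_mul_rid ai bi)+
    have ce: "c - mat 1 = (a ** b - b ** a) ** (ai ** bi)"
      unfolding c_def by (simp add: mm_diff_r matrix_mul_assoc canc bi)
    have ce2: "a ** b - b ** a = (a - mat 1) ** (b - mat 1) - (b - mat 1) ** (a - mat 1)"
      by (simp add: mm_diff_l mm_diff_r)
    have "dl (c - mat 1) = dl (a ** b - b ** a)" unfolding ce dl_Gr[OF aibi] ..
    also have "\<dots> \<le> dl ((a - mat 1) ** (b - mat 1)) + dl ((b - mat 1) ** (a - mat 1))"
      unfolding ce2 by (rule dl_diff)
    also have "\<dots> \<le> dl (a - mat 1) * dl (b - mat 1) + dl (b - mat 1) * dl (a - mat 1)"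
      by (intro add_mono dl_mult)
    also have "\<dots> < dl (b - mat 1)"
    proof -
      have "dl (a - mat 1) * dl (b - mat 1) < (1/2) * dl (b - mat 1)"
        using a(2) dbpos by (intro mult_strict_right_mono) auto
      then show ?thesis by (simp add: mult.commute)
    qed
    finally have dc: "dl (c - mat 1) < dl (b - mat 1)" .
    have cS: "c \<in> Ssm" using cG dc b(2) by (simp add: Ssm_def)
    have "{x\<in>G. dl (x - mat 1) < dl (c - mat 1)} \<subset> {x\<in>G. dl (x - mat 1) < dl (b - mat 1)}"
    proof
      show "{x\<in>G. dl (x - mat 1) < dl (c - mat 1)} \<subseteq> {x\<in>G. dl (x - mat 1) < dl (b - mat 1)}"
        using dc by auto
      show "{x\<in>G. dl (x - mat 1) < dl (c - mat 1)} \<noteq> {x\<in>G. dl (x - mat 1) < dl (b - mat 1)}"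
        using dc cG by auto
    qed
    then have "card {x\<in>G. dl (x - mat 1) < dl (c - mat 1)} < card {x\<in>G. dl (x - mat 1) < dl (b - mat 1)}"
      by (rule psubset_card_mono[rotated]) (simp add: fin)
    then have ac: "a ** c = c ** a" using less.IH cS by blast
    define w where "w = b ** ai ** bi"
    define a' where "a' = b ** a ** bi"
    have cw: "c = a ** w" unfolding c_def w_def by (simp add: matrix_mul_assoc)
    have "ai ** (a ** (a ** w)) = ai ** ((a ** w) ** a)" using ac cw by simp
    then have aw: "a ** w = w ** a" by (simp add: matrix_mul_assoc ai)
    have a'w: "a' ** w = mat 1" "w ** a' = mat 1"
      unfolding a'_def w_def by (simp_all add: matrix_mul_assoc canc bi)
    have "a' ** (a ** w) ** a' = a' ** (w ** a) ** a'" using aw by simp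
    then have "a' ** a = a ** a'"
      by (metis a'w matrix_mul_assoc matrix_mul_lid matrix_mul_rid)
    then have "a ** (b ** a ** matrix_inv b) = (b ** a ** matrix_inv b) ** a"
      unfolding a'_def bi_def by simp
    then have "a ** b = b ** a" by (rule lemma_K[OF a(1) b(1) b(2)])
    with nc show False by simp
  qed
qed


definition Cs :: "(complex^'n^'n) set" where
  "Cs = {y \<in> G. \<forall>s\<in>Ssm. y ** s = s ** y}"

definition Ab :: "(complex^'n^'n) set" where
  "Ab = {x \<in> G. \<forall>y\<in>Cs. x ** y = y ** x}"

lemma Ssm_conj: assumes g: "g \<in> G" and s: "s \<in> Ssm" shows "g ** s ** matrix_inv g \<in> Ssm"
proof -
  have sG: "s \<in> G" "dl (s - mat 1) < 1/2" using s by (auto simp: Ssm_def)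
  have gi: "matrix_inv g \<in> G" using g by (rule G_inv)
  have "g ** s ** matrix_inv g - mat 1 = g ** (s - mat 1) ** matrix_inv g"
    using g by (simp add: mm_diff_l mm_diff_r)
  then have "dl (g ** s ** matrix_inv g - mat 1) = dl (s - mat 1)"
    using dl_Gr[OF gi] dl_Gl[OF g] by simp
  moreover have "g ** s ** matrix_inv g \<in> G" using g sG gi by (intro G_mul)
  ultimately show ?thesis using sG by (simp add: Ssm_def)
qed

lemma Ssm_sub_G: "Ssm \<subseteq> G" by (auto simp: Ssm_def)

lemma Ssm_Cs: "Ssm \<subseteq> Cs"
  using Ssm_comm Ssm_sub_G unfolding Cs_def by blast

lemma Ab_sub_G: "Ab \<subseteq> G" by (auto simp: Ab_def)

lemma Ab_sub_Cs: "Ab \<subseteq> Cs"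
proof
  fix x assume x: "x \<in> Ab"
  have "x ** s = s ** x" if "s \<in> Ssm" for s
    using x Ssm_Cs that unfolding Ab_def by blast
  then show "x \<in> Cs" using x unfolding Cs_def Ab_def by blast
qed

lemma Ab_comm: "x \<in> Ab \<Longrightarrow> y \<in> Ab \<Longrightarrow> x ** y = y ** x"
  using Ab_sub_Cs unfolding Ab_def by blast

lemma Ssm_Ab: "Ssm \<subseteq> Ab"
  using Ssm_sub_G unfolding Ab_def Cs_def by auto

lemma Ab_one: "mat 1 \<in> Ab"
  using G_one unfolding Ab_def by simp

lemma Ab_mul: assumes "x \<in> Ab" "y \<in> Ab" shows "x ** y \<in> Ab"
proof -
  have "x ** y \<in> G" using assms G_mul by (auto simp: Ab_def)
  moreover have "x ** y ** z = z ** (x ** y)" if z: "z \<in> Cs" for z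
  proof -
    have "x ** z = z ** x" "y ** z = z ** y" using assms z by (auto simp: Ab_def)
    then show ?thesis by (metis matrix_mul_assoc)
  qed
  ultimately show ?thesis by (simp add: Ab_def matrix_mul_assoc)
qed

lemma Ab_inv: assumes x: "x \<in> Ab" shows "matrix_inv x \<in> Ab"
proof -
  have xG: "x \<in> G" using x by (auto simp: Ab_def)
  have "matrix_inv x ** y = y ** matrix_inv x" if y: "y \<in> Cs" for y
  proof -
    have "x ** y = y ** x" using x y by (auto simp: Ab_def)
    then have "matrix_inv x ** (x ** y) ** matrix_inv x = matrix_inv x ** (y ** x) ** matrix_inv x"
      by simp
    then show ?thesis using xG by (simp add: matrix_mul_assoc)
  qed
  then show ?thesis using G_inv[OF xG] by (simp add: Ab_def)
qed

lemma Ab_conj: assumes g: "g \<in> G" and x: "x \<in> Ab" shows "g ** x ** matrix_inv g \<in> Ab"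
proof -
  have xG: "x \<in> G" using x by (auto simp: Ab_def)
  have gi: "matrix_inv g \<in> G" using g by (rule G_inv)
  have "g ** x ** matrix_inv g \<in> G" using g xG gi by (intro G_mul)
  moreover have "g ** x ** matrix_inv g ** y = y ** (g ** x ** matrix_inv g)" if y: "y \<in> Cs" for y
  proof -
    have yG: "y \<in> G" using y by (auto simp: Cs_def)
    have zCs: "matrix_inv g ** y ** g \<in> Cs"
    proof -
      have "matrix_inv g ** y ** g \<in> G" using gi yG g by (intro G_mul)
      moreover have "matrix_inv g ** y ** g ** s = s ** (matrix_inv g ** y ** g)" if s: "s \<in> Ssm" for s
      proof -
        have s': "g ** s ** matrix_inv g \<in> Ssm" by (rule Ssm_conj[OF g s])
        then have e: "y ** (g ** s ** matrix_inv g) = (g ** s ** matrix_inv g) ** y"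
          using y by (auto simp: Cs_def)
        have "matrix_inv g ** y ** g ** s = matrix_inv g ** (y ** (g ** s ** matrix_inv g)) ** g"
          using g by (simp add: matrix_mul_assoc)
        also have "\<dots> = matrix_inv g ** ((g ** s ** matrix_inv g) ** y) ** g" unfolding e ..
        also have "\<dots> = s ** (matrix_inv g ** y ** g)" using g by (simp add: matrix_mul_assoc)
        finally show ?thesis .
      qed
      ultimately show ?thesis by (simp add: Cs_def)
    qed
    then have e: "x ** (matrix_inv g ** y ** g) = (matrix_inv g ** y ** g) ** x"
      using x by (auto simp: Ab_def)
    have "g ** x ** matrix_inv g ** y = g ** (x ** (matrix_inv g ** y ** g)) ** matrix_inv g"
      using g by (simp add: matrix_mul_assoc)
    also have "\<dots> = g ** ((matrix_inv g ** y ** g) ** x) ** matrix_inv g" unfolding e ..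
    also have "\<dots> = y ** (g ** x ** matrix_inv g)" using g by (simp add: matrix_mul_assoc)
    finally show ?thesis .
  qed
  ultimately show ?thesis by (simp add: Ab_def)
qed

lemma card_bound:
  fixes C :: "(complex^'n^'n) set set"
  assumes C: "\<And>X. X \<in> C \<Longrightarrow> \<exists>g\<in>G. X = (\<Union>h\<in>Ab. {h ** g})"
  shows "card C \<le> 25 ^ (CARD('n)^2) - 9 ^ (CARD('n)^2)"
proof -
  define cst :: "complex^'n^'n \<Rightarrow> (complex^'n^'n) set" where "cst g = (\<Union>h\<in>Ab. {h ** g})" for g
  define f where "f X = (SOME g. g \<in> G \<and> X = cst g)" for X
  have fX: "f X \<in> G \<and> X = cst (f X)" if "X \<in> C" for X
  proof -
    have "\<exists>g. g \<in> G \<and> X = cst g" using C[OF that] unfolding cst_def by blast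
    then show ?thesis unfolding f_def by (rule someI_ex)
  qed
  have inj: "inj_on f C"
    by (rule inj_onI) (metis fX)
  define R where "R = f ` C"
  have RG: "R \<subseteq> G" unfolding R_def using fX by blast
  have finR: "finite R" using RG fin finite_subset by blast
  have cardR: "card C = card R" unfolding R_def using inj by (simp add: card_image)
  have coset_eq: "cst (s ** y) = cst y" if s: "s \<in> Ab" for s y
  proof
    show "cst (s ** y) \<subseteq> cst y"
    proof
      fix z assume "z \<in> cst (s ** y)"
      then obtain h where h: "h \<in> Ab" "z = h ** (s ** y)" unfolding cst_def by blast
      then have "z = (h ** s) ** y" by (simp add: matrix_mul_assoc)
      moreover have "h ** s \<in> Ab" using h(1) s by (rule Ab_mul)
      ultimately show "z \<in> cst y" unfolding cst_def by blast
    qed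
    show "cst y \<subseteq> cst (s ** y)"
    proof
      fix z assume "z \<in> cst y"
      then obtain h where h: "h \<in> Ab" "z = h ** y" unfolding cst_def by blast
      have sG: "s \<in> G" using s Ab_sub_G by blast
      have "z = (h ** matrix_inv s) ** (s ** y)" using h sG by (simp add: matrix_mul_assoc)
      moreover have "h ** matrix_inv s \<in> Ab" using h(1) Ab_inv[OF s] by (rule Ab_mul)
      ultimately show "z \<in> cst (s ** y)" unfolding cst_def by blast
    qed
  qed
  have sep: "1/2 \<le> dl (x - y)" if xy: "x \<in> R" "y \<in> R" "x \<noteq> y" for x y
  proof (rule ccontr)
    assume "\<not> 1/2 \<le> dl (x - y)"
    then have lt: "dl (x - y) < 1/2" by simp
    obtain X Y where XY: "X \<in> C" "Y \<in> C" "x = f X" "y = f Y" using xy unfolding R_def by blast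
    have xG: "x \<in> G" and yG: "y \<in> G" using xy RG by auto
    define s where "s = x ** matrix_inv y"
    have sG: "s \<in> G" unfolding s_def using xG G_inv[OF yG] by (rule G_mul)
    have "s - mat 1 = (x - y) ** matrix_inv y" unfolding s_def using yG by (simp add: mm_diff_r)
    then have "dl (s - mat 1) = dl (x - y)" using dl_Gr[OF G_inv[OF yG]] by simp
    then have "s \<in> Ssm" using sG lt by (simp add: Ssm_def)
    then have sA: "s \<in> Ab" using Ssm_Ab by blast
    have "x = s ** y" unfolding s_def using yG by (simp add: matrix_mul_assoc[symmetric])
    then have "cst x = cst y" using coset_eq[OF sA] by simp
    then have "X = Y" using fX XY by metis
    then show False using xy XY by simp
  qed
  have "real (card R) \<le> 5 ^ DIM(complex^'n^'n) - 3 ^ DIM(complex^'n^'n)"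
    by (rule normlike.packing[OF dl_normlike finR]) (use RG dl_G sep in auto)
  also have "DIM(complex^'n^'n) = 2 * CARD('n)^2" by (simp add: power2_eq_square)
  finally have le: "real (card R) \<le> 5 ^ (2 * CARD('n)^2) - 3 ^ (2 * CARD('n)^2)" .
  have e5: "(5::real) ^ (2 * CARD('n)^2) = 25 ^ (CARD('n)^2)" by (simp add: power_mult)
  have e3: "(3::real) ^ (2 * CARD('n)^2) = 9 ^ (CARD('n)^2)" by (simp add: power_mult)
  have mono: "(9::nat) ^ (CARD('n)^2) \<le> 25 ^ (CARD('n)^2)" by (rule power_mono) auto
  have "real (card R) \<le> real (25 ^ (CARD('n)^2) - 9 ^ (CARD('n)^2))"
    using le mono unfolding e5 e3 by (simp add: of_nat_diff)
  then show ?thesis unfolding cardR by linarith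
qed

end

lemma invertible_mat1: "invertible (mat 1 :: complex^'n^'n)"
  unfolding invertible_def by (intro exI[of _ "mat 1"]) simp

lemma matrix_inv_invertible: "invertible (A::complex^'n^'n) \<Longrightarrow> invertible (matrix_inv A)"
  unfolding invertible_def[of "matrix_inv A"] using matrix_inv_props by blast

lemma GL_group: "group (GL :: (complex^'n^'n) monoid)"
proof (rule groupI)
  show "\<one>\<^bsub>GL\<^esub> \<in> carrier (GL :: (complex^'n^'n) monoid)" by (simp add: GL_def invertible_mat1)
  fix x y z :: "complex^'n^'n"
  assume x: "x \<in> carrier GL"
  then show "\<one>\<^bsub>GL\<^esub> \<otimes>\<^bsub>GL\<^esub> x = x" by (simp add: GL_def)
  show "\<exists>y\<in>carrier GL. y \<otimes>\<^bsub>GL\<^esub> x = \<one>\<^bsub>GL\<^esub>"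
    using x by (intro bexI[of _ "matrix_inv x"]) (simp_all add: GL_def matrix_inv_props matrix_inv_invertible)
  assume y: "y \<in> carrier GL"
  then show "x \<otimes>\<^bsub>GL\<^esub> y \<in> carrier GL" using x by (simp add: GL_def invertible_mult)
  show "z \<in> carrier GL \<Longrightarrow> x \<otimes>\<^bsub>GL\<^esub> y \<otimes>\<^bsub>GL\<^esub> z = x \<otimes>\<^bsub>GL\<^esub> (y \<otimes>\<^bsub>GL\<^esub> z)"
    by (simp add: GL_def matrix_mul_assoc)
qed

lemma GL_inv: "invertible x \<Longrightarrow> inv\<^bsub>(GL :: (complex^'n^'n) monoid)\<^esub> x = matrix_inv x"
  by (rule group.inv_equality[OF GL_group]) (simp_all add: GL_def matrix_inv_props matrix_inv_invertible)

theorem mainTheorem2: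
  fixes G :: "(complex^'n^'n) set"
  assumes "subgroup G (GL :: (complex^'n^'n) monoid)"
    and "finite G"
  shows "\<exists>A. normal A ((GL :: (complex^'n^'n) monoid)\<lparr>carrier := G\<rparr>)
             \<and> (\<forall>x\<in>A. \<forall>y\<in>A. x ** y = y ** x)
             \<and> card (rcosets\<^bsub>(GL :: (complex^'n^'n) monoid)\<lparr>carrier := G\<rparr>\<^esub> A)
                 \<le> 25 ^ (CARD('n)^2) - 9 ^ (CARD('n)^2)"
proof -
  let ?H = "(GL :: (complex^'n^'n) monoid)\<lparr>carrier := G\<rparr>"
  have sg: "subgroup G (GL :: (complex^'n^'n) monoid)" by fact
  have grpH: "group ?H" using subgroup.subgroup_is_group[OF sg GL_group] .
  have Ginv: "invertible x" if "x \<in> G" for x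
    using subgroup.subset[OF sg] that by (auto simp: GL_def)
  have GinvG: "matrix_inv x \<in> G" if "x \<in> G" for x
    using subgroup.m_inv_closed[OF sg that] GL_inv[OF Ginv[OF that]] by simp
  interpret F: fg G
  proof
    show "finite G" by fact
    show "mat 1 \<in> G" using subgroup.one_closed[OF sg] by (simp add: GL_def)
    show "x ** y \<in> G" if "x \<in> G" "y \<in> G" for x y
      using subgroup.m_closed[OF sg that] by (simp add: GL_def)
    show "invertible x" if "x \<in> G" for x using Ginv[OF that] .
    show "matrix_inv x \<in> G" if "x \<in> G" for x using GinvG[OF that] .
  qed
  have invH: "inv\<^bsub>?H\<^esub> x = matrix_inv x" if "x \<in> G" for x
    by (rule group.inv_equality[OF grpH])
       (use that GinvG[OF that] F.G_inv_l in \<open>simp_all add: GL_def\<close>)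
  have subA: "subgroup F.Ab ?H"
  proof (rule group.subgroupI[OF grpH])
    show "F.Ab \<subseteq> carrier ?H" using F.Ab_sub_G by simp
    show "F.Ab \<noteq> {}" using F.Ab_one by blast
    show "inv\<^bsub>?H\<^esub> a \<in> F.Ab" if "a \<in> F.Ab" for a
      using invH F.Ab_inv[OF that] F.Ab_sub_G that by auto
    show "a \<otimes>\<^bsub>?H\<^esub> b \<in> F.Ab" if "a \<in> F.Ab" "b \<in> F.Ab" for a b
      using F.Ab_mul[OF that] by (simp add: GL_def)
  qed
  have normA: "normal F.Ab ?H"
    unfolding group.normal_inv_iff[OF grpH]
  proof (intro conjI subA ballI)
    fix x h assume x: "x \<in> carrier ?H" and h: "h \<in> F.Ab"
    have "x \<otimes>\<^bsub>?H\<^esub> h \<otimes>\<^bsub>?H\<^esub> inv\<^bsub>?H\<^esub> x = x ** h ** matrix_inv x"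
      using x invH by (simp add: GL_def)
    then show "x \<otimes>\<^bsub>?H\<^esub> h \<otimes>\<^bsub>?H\<^esub> inv\<^bsub>?H\<^esub> x \<in> F.Ab"
      using F.Ab_conj[of x h] x h by simp
  qed
  have card: "card (rcosets\<^bsub>?H\<^esub> F.Ab) \<le> 25 ^ (CARD('n)^2) - 9 ^ (CARD('n)^2)"
  proof (rule F.card_bound)
    fix X assume "X \<in> rcosets\<^bsub>?H\<^esub> F.Ab"
    then obtain g where g: "g \<in> G" "X = F.Ab #>\<^bsub>?H\<^esub> g" unfolding RCOSETS_def by auto
    then have "X = (\<Union>h\<in>F.Ab. {h ** g})" by (simp add: r_coset_def GL_def)
    with g(1) show "\<exists>g\<in>G. X = (\<Union>h\<in>F.Ab. {h ** g})" by blast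
  qed
  show ?thesis using normA F.Ab_comm card by blast
qed

end
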